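(* Let $\boldsymbol{m}\in\mathbb{N}^2$ and $f\in\mathcal{L}(\mathrm{I}^{(\boldsymbol{m})})$, and let $P_f=\sum_{\boldsymbol{\gamma}\in\Gamma_\square}c_{\boldsymbol{\gamma}}(f)X_{\boldsymbol{\gamma}}$ be the unique function in $\Pi_\square$ with $P_f(r_{i_1},\theta_{i_2})=f(\boldsymbol{i})$ for all $\boldsymbol{i}\in\mathrm{I}^{(\boldsymbol{m})}$. Then $c_{\boldsymbol{\gamma}}(f)=\langle f,\chi_{\boldsymbol{\gamma}}\rangle_w/\|\chi_{\boldsymbol{\gamma}}\|_w^2$ for all $\boldsymbol{\gamma}\in\Gamma_\square$, and \[\frac1\pi\int_0^{2\pi}\!\!\int_0^1P_f(r,\theta)\,r\,dr\,d\theta=\sum_{k=0}^{\lfloor m_1/2\rfloor}\frac{c_{(4k,0)}(f)}{1-4k^2}.\] In particular, for every $P\in\Pi_\square$, taking $f(\boldsymbol{i})=P(r_{i_1},\theta_{i_2})$, the right-hand side equals $\frac1\pi\int_0^{2\pi}\int_0^1P(r,\theta)\,r\,dr\,d\theta$.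
   Context: $\mathrm{I}^{(\boldsymbol{m})}=\{(i_1,i_2)\in\mathbb{Z}^2:\ 0\le i_1\le m_1,\ -2m_2<i_2\le 2m_2,\ i_2\le0\text{ if }i_1=m_1,\ i_1+i_2\text{ even}\}$; $\mathcal{L}(\mathrm{I}^{(\boldsymbol{m})})$ is the space of all functions $\mathrm{I}^{(\boldsymbol{m})}\to\mathbb{C}$; $r_{i_1}=\cos\!\big(\frac{i_1\pi}{2m_1}\big)$, $\theta_{i_2}=\frac{i_2\pi}{2m_2}$. Weights $w_{\boldsymbol{i}}=\frac{1}{4m_1m_2}$ if $i_1=0$, $w_{\boldsymbol{i}}=\frac{2}{4m_1m_2}$ if $0<i_1\le m_1$; $\langle f,h\rangle_w=\sum_{\boldsymbol{i}}w_{\boldsymbol{i}}f(\boldsymbol{i})\overline{h(\boldsymbol{i})}$. $\chi_{\boldsymbol{\gamma}}(\boldsymbol{i})=\cos\!\big(\frac{\gamma_1i_1\pi}{2m_1}\big)e^{\mathrm{i}\gamma_2i_2\pi/(2m_2)}$. $X_{\boldsymbol{\gamma}}(r,\theta)=T_{\gamma_1}(r)e^{\mathrm{i}\gamma_2\theta}$ with $T_n(r)=\cos(n\arccos r)$. $\Gamma_\square=\{\boldsymbol{\gamma}\in\mathbb{Z}^2: 0\le\gamma_1\le2m_1,\ -m_2<\gamma_2\le m_2,\ \gamma_1+\gamma_2\text{ even}\}$ and $\Pi_\square=\mathrm{span}\{X_{\boldsymbol{\gamma}}:\boldsymbol{\gamma}\in\Gamma_\square\}$. *)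

theory Defs
  imports "HOL-Analysis.Analysis"
begin

definition Idx :: "nat \<Rightarrow> nat \<Rightarrow> (int \<times> int) set" where
  "Idx m1 m2 = {(i1, i2). 0 \<le> i1 \<and> i1 \<le> int m1 \<and> - 2 * int m2 < i2 \<and> i2 \<le> 2 * int m2
                  \<and> (i1 = int m1 \<longrightarrow> i2 \<le> 0) \<and> even (i1 + i2)}"

definition Gam :: "nat \<Rightarrow> nat \<Rightarrow> (int \<times> int) set" where
  "Gam m1 m2 = {(g1, g2). 0 \<le> g1 \<and> g1 \<le> 2 * int m1 \<and> - int m2 < g2 \<and> g2 \<le> int m2
                  \<and> even (g1 + g2)}"

definition rnode :: "nat \<Rightarrow> int \<Rightarrow> real" where
  "rnode m1 i1 = cos (of_int i1 * pi / (2 * real m1))"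

definition thnode :: "nat \<Rightarrow> int \<Rightarrow> real" where
  "thnode m2 i2 = of_int i2 * pi / (2 * real m2)"

definition wt :: "nat \<Rightarrow> nat \<Rightarrow> int \<times> int \<Rightarrow> real" where
  "wt m1 m2 i = (if fst i = 0 then 1 / (4 * real m1 * real m2) else 2 / (4 * real m1 * real m2))"

definition ipw :: "nat \<Rightarrow> nat \<Rightarrow> (int \<times> int \<Rightarrow> complex) \<Rightarrow> (int \<times> int \<Rightarrow> complex) \<Rightarrow> complex" where
  "ipw m1 m2 f h = (\<Sum>i\<in>Idx m1 m2. complex_of_real (wt m1 m2 i) * f i * cnj (h i))"

definition chi :: "nat \<Rightarrow> nat \<Rightarrow> int \<times> int \<Rightarrow> int \<times> int \<Rightarrow> complex" where
  "chi m1 m2 g i = complex_of_real (cos (of_int (fst g) * of_int (fst i) * pi / (2 * real m1)))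
                   * exp (\<i> * complex_of_real (of_int (snd g) * of_int (snd i) * pi / (2 * real m2)))"

definition cheb :: "int \<Rightarrow> real \<Rightarrow> real" where
  "cheb n r = cos (of_int n * arccos r)"

definition Xf :: "int \<times> int \<Rightarrow> real \<Rightarrow> real \<Rightarrow> complex" where
  "Xf g r \<theta> = complex_of_real (cheb (fst g) r) * exp (\<i> * complex_of_real (of_int (snd g) * \<theta>))"

definition Pc :: "nat \<Rightarrow> nat \<Rightarrow> (int \<times> int \<Rightarrow> complex) \<Rightarrow> real \<Rightarrow> real \<Rightarrow> complex" where
  "Pc m1 m2 c r \<theta> = (\<Sum>g\<in>Gam m1 m2. c g * Xf g r \<theta>)"

definition interp :: "nat \<Rightarrow> nat \<Rightarrow> (int \<times> int \<Rightarrow> complex) \<Rightarrow> (int \<times> int \<Rightarrow> complex) \<Rightarrow> bool" where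
  "interp m1 m2 c f = (\<forall>i\<in>Idx m1 m2. Pc m1 m2 c (rnode m1 (fst i)) (thnode m2 (snd i)) = f i)"

definition diskavg :: "(real \<Rightarrow> real \<Rightarrow> complex) \<Rightarrow> complex" where
  "diskavg P = complex_of_real (1 / pi) *
     integral {0..2*pi} (\<lambda>\<theta>. integral {0..1} (\<lambda>r. P r \<theta> * complex_of_real r))"

end

theory Submission
  imports Defs "HOL-Library.Function_Algebras"
begin
definition PS :: "int \<Rightarrow> nat \<Rightarrow> int \<Rightarrow> int set" where
  "PS lo n p = {x. lo < x \<and> x \<le> lo + 2 * int n \<and> even (x + p)}"

lemma PS_img: "PS lo n p = (\<lambda>t. 2 * int t + (if even (lo + 1 + p) then lo + 1 else lo + 2)) ` {..<n}"
proof -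
  define b where "b = (if even (lo + 1 + p) then lo + 1 else lo + 2)"
  have "x \<in> PS lo n p \<longleftrightarrow> (\<exists>t. t < n \<and> x = 2 * int t + b)" for x
  proof
    assume "x \<in> PS lo n p"
    hence x: "lo < x" "x \<le> lo + 2 * int n" "even (x + p)" by (auto simp: PS_def)
    have e: "even (x - b)" using x(3) by (auto simp: b_def)
    have "b \<le> x" using x e unfolding b_def by presburger
    moreover have "x < b + 2 * int n" using x e unfolding b_def by presburger
    ultimately show "\<exists>t. t < n \<and> x = 2 * int t + b" using e
      by (intro exI[of _ "nat ((x - b) div 2)"]) auto
  next
    assume "\<exists>t. t < n \<and> x = 2 * int t + b"
    then obtain t where "t < n" "x = 2 * int t + b" by auto
    thus "x \<in> PS lo n p" by (auto simp: PS_def b_def)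
  qed
  thus ?thesis by (auto simp: b_def image_iff)
qed

lemma PS_inj: "inj_on (\<lambda>t. 2 * int t + (b::int)) A"
  by (rule inj_onI) auto

lemma PS_card: "card (PS lo n p) = n"
  by (simp add: PS_img card_image[OF PS_inj])

lemma PS_finite: "finite (PS lo n p)"
  by (simp add: PS_img)

lemma cis_int_2pi: "cis (of_int k * (2 * pi)) = 1"
proof -
  have "cis (2 * pi * real_of_int k) = 1" by (rule cis_multiple_2pi) simp
  thus ?thesis by (simp add: mult.commute)
qed

lemma PS_geo:
  fixes \<delta> :: int and M :: nat
  assumes M: "M \<ge> 1"
    and cond: "\<delta> \<noteq> 0 \<Longrightarrow> \<bar>\<delta>\<bar> < 2 * int M \<and> (n = 2 * M \<or> (n = M \<and> even \<delta>))"
  shows "(\<Sum>x\<in>PS lo n p. cis (of_int \<delta> * of_int x * pi / (2 * real M))) = (if \<delta> = 0 then of_nat n else 0)"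
proof -
  define b where "b = (if even (lo + 1 + p) then lo + 1 else lo + 2)"
  define z where "z = cis (of_int \<delta> * pi / real M)"
  have "(\<Sum>x\<in>PS lo n p. cis (of_int \<delta> * of_int x * pi / (2 * real M)))
      = (\<Sum>t<n. cis (of_int \<delta> * of_int (2 * int t + b) * pi / (2 * real M)))"
    unfolding PS_img b_def[symmetric] by (simp add: sum.reindex[OF PS_inj])
  also have "\<dots> = (\<Sum>t<n. cis (of_int \<delta> * of_int b * pi / (2 * real M)) * z ^ t)"
  proof (intro sum.cong refl)
    fix t assume "t \<in> {..<n}"
    have "cis (of_int \<delta> * of_int b * pi / (2 * real M)) * z ^ t
        = cis (of_int \<delta> * of_int b * pi / (2 * real M) + real t * (of_int \<delta> * pi / real M))"
      unfolding z_def Complex.DeMoivre cis_mult by (rule arg_cong[where f=cis]) (simp add: algebra_simps)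
    also have "\<dots> = cis (of_int \<delta> * of_int (2 * int t + b) * pi / (2 * real M))"
      using M by (intro arg_cong[where f=cis]) (simp add: field_simps)
    finally show "cis (of_int \<delta> * of_int (2 * int t + b) * pi / (2 * real M)) = cis (of_int \<delta> * of_int b * pi / (2 * real M)) * z ^ t" by simp
  qed
  also have "\<dots> = cis (of_int \<delta> * of_int b * pi / (2 * real M)) * (\<Sum>t<n. z ^ t)"
    by (simp add: sum_distrib_left)
  also have "\<dots> = (if \<delta> = 0 then of_nat n else 0)"
  proof (cases "\<delta> = 0")
    case True thus ?thesis by (simp add: z_def)
  next
    case False
    from cond[OF False] have d: "\<bar>\<delta>\<bar> < 2 * int M" and nn: "n = 2 * M \<or> (n = M \<and> even \<delta>)" by auto
    have z1: "z \<noteq> 1"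
    proof
      assume "z = 1"
      hence "cos (of_int \<delta> * pi / real M) = 1" by (simp add: z_def complex_eq_iff)
      then obtain k :: int where k: "of_int \<delta> * pi / real M = of_int k * 2 * pi" by (auto simp: cos_one_2pi_int)
      have Mp: "real M > 0" using M by simp
      have "of_int \<delta> * pi = of_int k * 2 * pi * real M" using k Mp by (simp add: divide_eq_eq)
      hence "real_of_int \<delta> = real_of_int (k * 2 * int M)" by simp
      hence dk: "\<delta> = k * 2 * int M" by (simp only: of_int_eq_iff)
      have "k \<noteq> 0" using dk False by auto
      hence "1 \<le> \<bar>k\<bar>" by simp
      hence "1 * (2 * int M) \<le> \<bar>k\<bar> * (2 * int M)" by (intro mult_right_mono) auto
      also have "\<bar>k\<bar> * (2 * int M) = \<bar>\<delta>\<bar>" using dk by (simp add: abs_mult)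
      finally show False using d by simp
    qed
    have zn: "z ^ n = 1"
      using nn
    proof
      assume "n = 2 * M"
      hence "z ^ n = cis (of_int \<delta> * (2 * pi))" unfolding z_def Complex.DeMoivre using M by (intro arg_cong[where f=cis]) (simp add: field_simps)
      thus ?thesis by (simp add: cis_int_2pi)
    next
      assume "n = M \<and> even \<delta>"
      then obtain k where "n = M" "\<delta> = 2 * k" by auto
      hence "z ^ n = cis (of_int k * (2 * pi))" unfolding z_def Complex.DeMoivre using M by (intro arg_cong[where f=cis]) (simp add: field_simps)
      thus ?thesis by (simp add: cis_int_2pi)
    qed
    show ?thesis using z1 zn False by (simp add: sum_gp_strict)
  qed
  finally show ?thesis .
qed

lemma dirichlet:
  "2 * sin (y/2) * (\<Sum>j\<le>N. cos (real j * y)) = sin (y/2) + sin ((real N + 1/2) * y)"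
proof (induction N)
  case 0 thus ?case by simp
next
  case (Suc N)
  have "2 * sin (y/2) * cos (real (Suc N) * y) = sin (y/2 + real (Suc N) * y) + sin (y/2 - real (Suc N) * y)"
    using sin_times_cos[of "y/2" "real (Suc N) * y"] by simp
  also have "y/2 + real (Suc N) * y = (real (Suc N) + 1/2) * y" by (simp add: algebra_simps)
  also have "sin (y/2 - real (Suc N) * y) = - sin ((real N + 1/2) * y)"
  proof -
    have "y/2 - real (Suc N) * y = - ((real N + 1/2) * y)" by (simp add: algebra_simps)
    thus ?thesis by (simp del: sin_minus add: sin_minus[symmetric])
  qed
  finally have "2 * sin (y/2) * cos (real (Suc N) * y) = sin ((real (Suc N) + 1/2) * y) - sin ((real N + 1/2) * y)" by simp
  thus ?case using Suc by (simp add: distrib_left)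
qed

lemma trap:
  fixes n :: int and M :: nat
  assumes M: "M \<ge> 1" and ev: "even n" and nz: "n \<noteq> 0" and lt: "\<bar>n\<bar> < 4 * int M"
  shows "(\<Sum>i\<in>{0..int M}. (if i = 0 \<or> i = int M then 1 / (2 * real M) else 1 / real M)
            * cos (of_int n * of_int i * pi / (2 * real M))) = 0"
proof -
  define y where "y = of_int n * pi / (2 * real M)"
  have img: "{0..int M} = int ` {..M}" by (simp add: image_int_atLeastAtMost atMost_atLeast0)
  have "(\<Sum>i\<in>{0..int M}. (if i = 0 \<or> i = int M then 1 / (2 * real M) else 1 / real M)
            * cos (of_int n * of_int i * pi / (2 * real M)))
      = (\<Sum>j\<le>M. (1 / real M - (if j = 0 then 1 / (2 * real M) else 0) - (if j = M then 1 / (2 * real M) else 0))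
            * cos (real j * y))"
    unfolding img using M by (subst sum.reindex) (auto intro!: sum.cong simp: y_def field_simps)
  also have "\<dots> = (1 / real M) * (\<Sum>j\<le>M. cos (real j * y)) - 1 / (2 * real M) - 1 / (2 * real M) * cos (real M * y)"
    using M by (simp add: left_diff_distrib sum_subtractf sum_distrib_left if_distrib[of "\<lambda>x. x * _"] sum.delta cong: if_cong)
  also have "(\<Sum>j\<le>M. cos (real j * y)) = (1 + cos (real M * y)) / 2"
  proof -
    have s: "sin (y/2) \<noteq> 0"
    proof
      assume "sin (y/2) = 0"
      then obtain i :: int where i: "y / 2 = of_int i * pi" by (auto simp: sin_zero_iff_int2)
      have Mp: "real M > 0" using M by simp
      have "of_int n * pi = of_int i * pi * (4 * real M)" using i Mp by (simp add: y_def divide_eq_eq)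
      hence "real_of_int n = real_of_int (i * (4 * int M))" by simp
      hence ni: "n = i * (4 * int M)" by (simp only: of_int_eq_iff)
      have "i \<noteq> 0" using ni nz by auto
      hence "1 \<le> \<bar>i\<bar>" by simp
      hence "1 * (4 * int M) \<le> \<bar>i\<bar> * (4 * int M)" by (intro mult_right_mono) auto
      also have "\<bar>i\<bar> * (4 * int M) = \<bar>n\<bar>" using ni by (simp add: abs_mult)
      finally show False using lt by simp
    qed
    obtain k where k: "n = 2 * k" using ev by auto
    have "real M * y = pi * of_int k" using M by (simp add: y_def k field_simps)
    hence "sin ((real M + 1/2) * y) = cos (real M * y) * sin (y/2)"
      by (simp add: distrib_right sin_add)
    hence "2 * sin (y/2) * (\<Sum>j\<le>M. cos (real j * y)) = sin (y/2) * (1 + cos (real M * y))"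
      using dirichlet[of y M] by (simp add: algebra_simps)
    hence "sin (y/2) * (2 * (\<Sum>j\<le>M. cos (real j * y)) - (1 + cos (real M * y))) = 0"
      by (simp add: algebra_simps)
    hence "2 * (\<Sum>j\<le>M. cos (real j * y)) - (1 + cos (real M * y)) = 0" using s by simp
    thus ?thesis by simp
  qed
  finally show ?thesis using M by (simp add: field_simps)
qed

lemma Idx_Sigma: "Idx m1 m2 = Sigma {0..int m1} (\<lambda>i1. PS (- 2 * int m2) (if i1 = int m1 then m2 else 2 * m2) i1)"
  by (auto simp: Idx_def PS_def split: if_splits)

lemma Gam_Sigma: "Gam m1 m2 = Sigma {0..2 * int m1} (\<lambda>g1. PS (- int m2) m2 g1)"
  by (auto simp: Gam_def PS_def add.commute)

lemma finite_Idx: "finite (Idx m1 m2)"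
  by (simp add: Idx_Sigma PS_finite)

lemma finite_Gam: "finite (Gam m1 m2)"
  by (simp add: Gam_Sigma PS_finite)

lemma card_Idx: "card (Idx m1 m2) = card (Gam m1 m2)"
proof -
  have "card (Idx m1 m2) = (\<Sum>i1\<in>{0..int m1}. if i1 = int m1 then m2 else 2 * m2)"
    by (simp add: Idx_Sigma card_SigmaI PS_finite PS_card)
  also have "\<dots> = (\<Sum>i1\<in>{0..<int m1}. 2 * m2) + m2"
  proof -
    have "{0..int m1} = insert (int m1) {0..<int m1}" by auto
    thus ?thesis by (simp add: add.commute)
  qed
  also have "\<dots> = (2 * m1 + 1) * m2" by simp
  also have "\<dots> = card (Gam m1 m2)"
  proof -
    have "nat (2 * int m1 + 1) = 2 * m1 + 1" by arith
    thus ?thesis by (simp add: Gam_Sigma card_SigmaI PS_finite PS_card)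
  qed
  finally show ?thesis .
qed

lemma chi_cis: "chi m1 m2 g i = complex_of_real (cos (of_int (fst g) * of_int (fst i) * pi / (2 * real m1)))
   * cis (of_int (snd g) * of_int (snd i) * pi / (2 * real m2))"
  by (simp add: chi_def cis_conv_exp)

lemma cos_odd_half: "odd (k::int) \<Longrightarrow> cos (of_int k * of_int M * pi / (2 * real M)) = 0" if "M > 0" for M :: nat
proof -
  assume "odd k"
  have "of_int k * of_int M * pi / (2 * real M) = of_int k * (pi / 2)" using that by (simp add: field_simps)
  thus ?thesis using \<open>odd k\<close> by (auto simp: cos_zero_iff_int)
qed

lemma orth:
  assumes m1: "m1 \<ge> 1" and m2: "m2 \<ge> 1"
    and g: "g \<in> Gam m1 m2" and g': "g' \<in> Gam m1 m2" and ne: "g \<noteq> g'"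
  shows "(\<Sum>i\<in>Idx m1 m2. complex_of_real (wt m1 m2 i) * chi m1 m2 g' i * cnj (chi m1 m2 g i)) = 0"
proof -
  obtain a e where ae: "g = (a, e)" by (cases g)
  obtain b e' where be: "g' = (b, e')" by (cases g')
  define \<delta> where "\<delta> = e' - e"
  define Cf where "Cf c i1 = cos (of_int c * of_int i1 * pi / (2 * real m1))" for c i1 :: int
  define F where "F i1 = (if i1 = 0 then 1 / (4 * real m1 * real m2) else 2 / (4 * real m1 * real m2)) * (Cf b i1 * Cf a i1)" for i1
  define nn where "nn i1 = (if i1 = int m1 then m2 else 2 * m2)" for i1
  define Q where "Q i1 = (\<Sum>i2\<in>PS (- 2 * int m2) (nn i1) i1. cis (of_int \<delta> * of_int i2 * pi / (2 * real m2)))" for i1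
  have "(\<Sum>i\<in>Idx m1 m2. complex_of_real (wt m1 m2 i) * chi m1 m2 g' i * cnj (chi m1 m2 g i))
      = (\<Sum>i\<in>Idx m1 m2. complex_of_real (F (fst i)) * cis (of_int \<delta> * of_int (snd i) * pi / (2 * real m2)))"
  proof (intro sum.cong refl)
    fix i :: "int \<times> int"
    have "cis (of_int e' * of_int (snd i) * pi / (2 * real m2)) * cis (- (of_int e * of_int (snd i) * pi / (2 * real m2)))
        = cis (of_int \<delta> * of_int (snd i) * pi / (2 * real m2))"
      by (simp add: cis_mult \<delta>_def diff_divide_distrib left_diff_distrib)
    thus "complex_of_real (wt m1 m2 i) * chi m1 m2 g' i * cnj (chi m1 m2 g i)
        = complex_of_real (F (fst i)) * cis (of_int \<delta> * of_int (snd i) * pi / (2 * real m2))"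
      by (simp add: chi_cis ae be F_def Cf_def wt_def cis_cnj mult_ac)
  qed
  also have "\<dots> = (\<Sum>i1\<in>{0..int m1}. \<Sum>i2\<in>PS (- 2 * int m2) (nn i1) i1.
        complex_of_real (F i1) * cis (of_int \<delta> * of_int i2 * pi / (2 * real m2)))"
    by (simp add: Idx_Sigma sum.Sigma PS_finite split_def nn_def)
  also have "\<dots> = (\<Sum>i1\<in>{0..int m1}. complex_of_real (F i1) * Q i1)"
    by (simp add: Q_def sum_distrib_left)
  also have "\<dots> = 0"
  proof -
    from g g' have ga: "0 \<le> a" "a \<le> 2 * int m1" "- int m2 < e" "e \<le> int m2" "even (a + e)"
      and gb: "0 \<le> b" "b \<le> 2 * int m1" "- int m2 < e'" "e' \<le> int m2" "even (b + e')"
      by (auto simp: Gam_def ae be)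
    have dl: "\<bar>\<delta>\<bar> < 2 * int m2" using ga gb by (simp add: \<delta>_def)
    show ?thesis
    proof (cases "\<delta> = 0")
      case False
      show ?thesis
      proof (rule sum.neutral, rule ballI)
        fix i1 assume i1: "i1 \<in> {0..int m1}"
        show "complex_of_real (F i1) * Q i1 = 0"
        proof (cases "i1 = int m1 \<and> odd \<delta>")
          case True
          have "odd a \<or> odd b" using True ga(5) gb(5) unfolding \<delta>_def by presburger
          have cz: "Cf c (int m1) = 0" if "odd c" for c
            unfolding Cf_def using cos_odd_half[of m1 c] m1 that by simp
          hence "Cf b i1 * Cf a i1 = 0" using True \<open>odd a \<or> odd b\<close> by auto
          thus ?thesis by (simp add: F_def)
        next
          case False
          have "Q i1 = 0" unfolding Q_def using m2 dl False \<open>\<delta> \<noteq> 0\<close>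
            by (subst PS_geo) (auto simp: nn_def)
          thus ?thesis by simp
        qed
      qed
    next
      case True
      hence ee: "e = e'" by (simp add: \<delta>_def)
      hence ab: "a \<noteq> b" using ne ae be by auto
      have Qv: "Q i1 = of_nat (nn i1)" for i1 unfolding Q_def using m2 True by (subst PS_geo) auto
      have "(\<Sum>i1\<in>{0..int m1}. complex_of_real (F i1) * Q i1)
          = complex_of_real (\<Sum>i1\<in>{0..int m1}. F i1 * real (nn i1))"
        by (simp add: Qv)
      also have "(\<Sum>i1\<in>{0..int m1}. F i1 * real (nn i1))
        = (1/2) * (\<Sum>i\<in>{0..int m1}. (if i = 0 \<or> i = int m1 then 1 / (2 * real m1) else 1 / real m1)
            * cos (of_int (b - a) * of_int i * pi / (2 * real m1)))
          + (1/2) * (\<Sum>i\<in>{0..int m1}. (if i = 0 \<or> i = int m1 then 1 / (2 * real m1) else 1 / real m1)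
            * cos (of_int (b + a) * of_int i * pi / (2 * real m1)))"
        unfolding sum_distrib_left sum.distrib[symmetric]
      proof (intro sum.cong refl)
        fix i1 assume "i1 \<in> {0..int m1}"
        have cc: "Cf b i1 * Cf a i1 = (cos (of_int (b - a) * of_int i1 * pi / (2 * real m1))
             + cos (of_int (b + a) * of_int i1 * pi / (2 * real m1))) / 2"
          unfolding Cf_def cos_times_cos by (simp add: algebra_simps diff_divide_distrib add_divide_distrib)
        show "F i1 * real (nn i1) = 1 / 2 * ((if i1 = 0 \<or> i1 = int m1 then 1 / (2 * real m1) else 1 / real m1) *
            cos (real_of_int (b - a) * real_of_int i1 * pi / (2 * real m1))) +
           1 / 2 * ((if i1 = 0 \<or> i1 = int m1 then 1 / (2 * real m1) else 1 / real m1) *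
            cos (real_of_int (b + a) * real_of_int i1 * pi / (2 * real m1)))"
          using m1 m2 unfolding F_def nn_def cc by (auto simp: field_simps)
      qed
      also have "\<dots> = 0"
      proof -
        have "even (b - a)" "even (b + a)" using ga(5) gb(5) ee by presburger+
        moreover have "b - a \<noteq> 0" "b + a \<noteq> 0" using ab ga gb by auto
        moreover have "\<bar>b - a\<bar> < 4 * int m1" "\<bar>b + a\<bar> < 4 * int m1" using ga gb ab m1 by auto
        ultimately show ?thesis using m1 trap[of m1 "b - a"] trap[of m1 "b + a"] by simp
      qed
      finally show ?thesis by simp
    qed
  qed
  finally show ?thesis .
qed

lemma sin_sum_ident:
  fixes j t :: real shows "sin (2 * (1 + j) * t) + sin (2 * (1 - j) * t) = 4 * sin t * cos t * cos (2 * j * t)"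
proof -
  have "sin (2 * t + 2 * j * t) + sin (2 * t - 2 * j * t) = 2 * sin (2 * t) * cos (2 * j * t)"
    by (simp add: sin_add sin_diff)
  moreover have "2 * (1 + j) * t = 2 * t + 2 * j * t" "2 * (1 - j) * t = 2 * t - 2 * j * t"
    by (simp_all add: algebra_simps)
  ultimately show ?thesis by (simp add: sin_double)
qed

lemma A_int:
  fixes j :: int
  shows "((\<lambda>r. cos (of_int (2 * j) * arccos r) * r) has_integral
          (if even j then 1 / (2 * (1 - (of_int j)^2)) else 0)) {0..1}"
proof -
  define h where "h a t = cos (2 * of_int a * t) * (1 / (2 * of_int a))" for a :: int and t :: real
  define G where "G r = (h (1 + j) (arccos r) + h (1 - j) (arccos r)) / 4" for r
  have hd: "((h a) has_real_derivative (- sin (2 * of_int a * t))) (at t)" for a t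
  proof -
    have "((h a) has_real_derivative (- sin (2 * of_int a * t) * (2 * of_int a) * (1 / (2 * of_int a)))) (at t)"
      unfolding h_def by (auto intro!: derivative_eq_intros)
    moreover have "- sin (2 * of_int a * t) * (2 * of_int a) * (1 / (2 * of_int a)) = - sin (2 * of_int a * t)"
      by (cases "a = 0") auto
    ultimately show ?thesis by simp
  qed
  have Gd: "(G has_real_derivative (cos (of_int (2 * j) * arccos r) * r)) (at r)" if r: "0 < r" "r < 1" for r
  proof -
    define t where "t = arccos r"
    have ha: "((\<lambda>r. h a (arccos r)) has_real_derivative (- sin (2 * of_int a * t) * inverse (- sqrt (1 - r\<^sup>2)))) (at r)" for a
      unfolding t_def using r by (intro DERIV_chain2[OF hd DERIV_arccos]) auto
    have "(G has_real_derivative ((- sin (2 * of_int (1 + j) * t) * inverse (- sqrt (1 - r\<^sup>2))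
        + - sin (2 * of_int (1 - j) * t) * inverse (- sqrt (1 - r\<^sup>2))) / 4)) (at r)"
      unfolding G_def by (intro DERIV_cdivide DERIV_add ha)
    moreover have "(- sin (2 * of_int (1 + j) * t) * inverse (- sqrt (1 - r\<^sup>2))
        + - sin (2 * of_int (1 - j) * t) * inverse (- sqrt (1 - r\<^sup>2))) / 4 = cos (of_int (2 * j) * arccos r) * r"
    proof -
      have st: "sqrt (1 - r\<^sup>2) = sin t" using r by (simp add: t_def sin_arccos_abs)
      have s0: "sin t \<noteq> 0" using r by (simp add: t_def sin_arccos_nonzero)
      have ct: "cos t = r" using r by (simp add: t_def)
      have "sin (2 * of_int (1 + j) * t) + sin (2 * of_int (1 - j) * t) = 4 * sin t * cos t * cos (2 * of_int j * t)"
        using sin_sum_ident[of "of_int j" t] by simp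
      hence "(- sin (2 * of_int (1 + j) * t) * inverse (- sqrt (1 - r\<^sup>2))
        + - sin (2 * of_int (1 - j) * t) * inverse (- sqrt (1 - r\<^sup>2))) / 4
        = (sin (2 * of_int (1 + j) * t) + sin (2 * of_int (1 - j) * t)) / (4 * sin t)"
        using st by (simp add: field_simps)
      also have "\<dots> = cos t * cos (2 * of_int j * t)"
        using s0 \<open>sin (2 * of_int (1 + j) * t) + _ = _\<close> by (simp add: field_simps)
      finally show ?thesis using ct by (simp add: t_def mult.commute)
    qed
    ultimately show ?thesis by simp
  qed
  have cont: "continuous_on {0..1} G"
    unfolding G_def h_def by (intro continuous_intros) auto
  have "((\<lambda>r. cos (of_int (2 * j) * arccos r) * r) has_integral (G 1 - G 0)) {0..1}"
    by (rule fundamental_theorem_of_calculus_interior[OF _ cont], simp,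
        unfold has_real_derivative_iff_has_vector_derivative[symmetric], rule Gd, auto)
  moreover have "G 1 - G 0 = (if even j then 1 / (2 * (1 - (of_int j)^2)) else 0)"
  proof -
    have c: "cos (2 * of_int a * (pi / 2)) = (if even a then 1 else -1)" for a :: int
      using cos_npi_int[of a] by (simp add: mult.commute)
    have "G 1 - G 0 = ((1 - cos (2 * of_int (1 + j) * (pi/2))) / (2 * of_int (1 + j))
                     + (1 - cos (2 * of_int (1 - j) * (pi/2))) / (2 * of_int (1 - j))) / 4"
    proof -
      have hd: "h a 0 - h a (pi/2) = (1 - cos (2 * of_int a * (pi/2))) / (2 * of_int a)" for a
        unfolding h_def by (simp add: field_simps)
      have "G 1 - G 0 = ((h (1 + j) 0 - h (1 + j) (pi/2)) + (h (1 - j) 0 - h (1 - j) (pi/2))) / 4"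
        unfolding G_def by (simp add: field_simps)
      thus ?thesis by (simp only: hd)
    qed
    also have "\<dots> = (if even j then 1 / (2 * (1 - (of_int j)^2)) else 0)"
    proof (cases "even j")
      case True
      hence "(1 + j) \<noteq> 0" "1 - j \<noteq> 0" by presburger+
      hence "real_of_int 1 + of_int j \<noteq> 0" "real_of_int 1 - of_int j \<noteq> 0" by linarith+
      moreover have "1 - (real_of_int j)^2 \<noteq> 0"
      proof -
        have "1 - (real_of_int j)^2 = (1 + of_int j) * (1 - of_int j)" by (simp add: algebra_simps power2_eq_square)
        thus ?thesis using calculation by simp
      qed
      ultimately show ?thesis using True by (simp only: c) (simp add: field_simps power2_eq_square)
    next
      case False
      thus ?thesis by (simp only: c) simp
    qed
    finally show ?thesis .
  qed
  ultimately show ?thesis by simp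
qed

lemma exp_int:
  fixes n :: int
  shows "((\<lambda>\<theta>. exp (\<i> * complex_of_real (of_int n * \<theta>))) has_integral
           (if n = 0 then complex_of_real (2 * pi) else 0)) {0..2 * pi}"
proof (cases "n = 0")
  case True
  show ?thesis using True has_integral_const_real[of "1::complex" 0 "2*pi"] by (simp add: scaleR_conv_of_real)
next
  case False
  define F where "F z = exp (\<i> * of_int n * z) / (\<i> * of_int n)" for z :: complex
  have d: "((\<lambda>x. F (of_real x)) has_vector_derivative exp (\<i> * complex_of_real (of_int n * x))) (at x within {0..2*pi})" for x
  proof -
    have "(F has_field_derivative exp (\<i> * of_int n * of_real x) * (\<i> * of_int n) / (\<i> * of_int n)) (at (of_real x))"
      unfolding F_def by (auto intro!: derivative_eq_intros)
    hence "(F has_field_derivative exp (\<i> * complex_of_real (of_int n * x))) (at (of_real x))"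
      using False by (simp add: mult.assoc)
    thus ?thesis by (rule has_vector_derivative_real_field)
  qed
  have "((\<lambda>\<theta>. exp (\<i> * complex_of_real (of_int n * \<theta>))) has_integral (F (of_real (2*pi)) - F (of_real 0))) {0..2 * pi}"
    by (rule fundamental_theorem_of_calculus) (use d in auto)
  moreover have "F (of_real (2*pi)) - F (of_real 0) = 0"
  proof -
    have "exp (\<i> * of_int n * complex_of_real (2 * pi)) = cis (of_int n * (2 * pi))"
      by (simp add: cis_conv_exp mult_ac)
    thus ?thesis by (simp add: F_def cis_int_2pi)
  qed
  ultimately show ?thesis using False by simp
qed

lemma cheb_int: "((\<lambda>r. cheb n r * r) has_integral integral {0..1} (\<lambda>r. cheb n r * r)) {0..1}"
proof -
  have "continuous_on {0..1} (\<lambda>r. cheb n r * r)"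
    unfolding cheb_def by (intro continuous_intros) auto
  thus ?thesis by (intro integrable_integral integrable_continuous_interval)
qed

lemma disk:
  assumes m1: "m1 \<ge> 1" and m2: "m2 \<ge> 1"
  shows "diskavg (Pc m1 m2 c) = (\<Sum>k=0..m1 div 2. c (4 * int k, 0) / complex_of_real (1 - 4 * real k ^ 2))"
proof -
  define Ar where "Ar n = integral {0..1} (\<lambda>r. cheb n r * r)" for n
  define E where "E g \<theta> = exp (\<i> * complex_of_real (of_int (snd g) * \<theta>))" for g :: "int \<times> int" and \<theta>
  have inner: "integral {0..1} (\<lambda>r. Pc m1 m2 c r \<theta> * complex_of_real r)
      = (\<Sum>g\<in>Gam m1 m2. (c g * E g \<theta>) * complex_of_real (Ar (fst g)))" for \<theta>
  proof -
    have eq: "(\<lambda>r. Pc m1 m2 c r \<theta> * complex_of_real r)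
        = (\<lambda>r. \<Sum>g\<in>Gam m1 m2. (c g * E g \<theta>) * complex_of_real (cheb (fst g) r * r))"
      by (auto simp: Pc_def Xf_def E_def sum_distrib_right sum_distrib_left mult_ac)
    have "((\<lambda>r. \<Sum>g\<in>Gam m1 m2. (c g * E g \<theta>) * complex_of_real (cheb (fst g) r * r)) has_integral
        (\<Sum>g\<in>Gam m1 m2. (c g * E g \<theta>) * complex_of_real (Ar (fst g)))) {0..1}"
      unfolding Ar_def
      by (intro has_integral_sum finite_Gam has_integral_mult_right has_integral_of_real cheb_int)
    thus ?thesis unfolding eq by (rule integral_unique)
  qed
  have outer: "((\<lambda>\<theta>. \<Sum>g\<in>Gam m1 m2. (c g * complex_of_real (Ar (fst g))) * E g \<theta>) has_integral
       (\<Sum>g\<in>Gam m1 m2. (c g * complex_of_real (Ar (fst g))) * (if snd g = 0 then complex_of_real (2 * pi) else 0))) {0..2*pi}"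
    unfolding E_def by (intro has_integral_sum finite_Gam has_integral_mult_right exp_int)
  have "diskavg (Pc m1 m2 c) = complex_of_real (1/pi) *
      (\<Sum>g\<in>Gam m1 m2. (c g * complex_of_real (Ar (fst g))) * (if snd g = 0 then complex_of_real (2 * pi) else 0))"
    unfolding diskavg_def inner using integral_unique[OF outer] by (simp add: mult_ac)
  also have "\<dots> = (\<Sum>g\<in>Gam m1 m2. if snd g = 0 then 2 * c g * complex_of_real (Ar (fst g)) else 0)"
    by (simp add: sum_distrib_left if_distrib mult_ac cong: if_cong)
  also have "\<dots> = (\<Sum>g\<in>(\<lambda>k. (4 * int k, 0)) ` {0..m1 div 2}. if snd g = 0 then 2 * c g * complex_of_real (Ar (fst g)) else 0)"
  proof (rule sum.mono_neutral_right[OF finite_Gam])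
    show "(\<lambda>k. (4 * int k, 0)) ` {0..m1 div 2} \<subseteq> Gam m1 m2"
      using m2 by (auto simp: Gam_def)
    show "\<forall>g\<in>Gam m1 m2 - (\<lambda>k. (4 * int k, 0)) ` {0..m1 div 2}.
            (if snd g = 0 then 2 * c g * complex_of_real (Ar (fst g)) else 0) = 0"
    proof
      fix g assume g: "g \<in> Gam m1 m2 - (\<lambda>k. (4 * int k, 0)) ` {0..m1 div 2}"
      obtain a e where ae: "g = (a, e)" by (cases g)
      show "(if snd g = 0 then 2 * c g * complex_of_real (Ar (fst g)) else 0) = 0"
      proof (cases "e = 0")
        case True
        with g ae have a: "0 \<le> a" "a \<le> 2 * int m1" "even a" by (auto simp: Gam_def)
        then obtain j where j: "a = 2 * j" by auto
        have "odd j"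
        proof
          assume "even j"
          then obtain k where k: "j = 2 * k" by auto
          have "k \<ge> 0" "4 * k \<le> 2 * int m1" using a j k by auto
          hence "nat k \<in> {0..m1 div 2}" by auto
          moreover have "g = (4 * int (nat k), 0)" using ae True j k \<open>k \<ge> 0\<close> by simp
          ultimately have "g \<in> (\<lambda>k. (4 * int k, 0)) ` {0..m1 div 2}" by (intro image_eqI)
          thus False using g by blast
        qed
        have "Ar a = 0" unfolding Ar_def j cheb_def using integral_unique[OF A_int[of j]] \<open>odd j\<close> by simp
        thus ?thesis using ae by simp
      qed (use ae in simp)
    qed
  qed
  also have "\<dots> = (\<Sum>k=0..m1 div 2. 2 * c (4 * int k, 0) * complex_of_real (Ar (4 * int k)))"
    by (subst sum.reindex) (auto simp: inj_on_def)
  also have "\<dots> = (\<Sum>k=0..m1 div 2. c (4 * int k, 0) / complex_of_real (1 - 4 * real k ^ 2))"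
  proof (rule sum.cong[OF refl])
    fix k assume "k \<in> {0..m1 div 2}"
    have "Ar (4 * int k) = 1 / (2 * (1 - (of_int (2 * int k))^2))"
      unfolding Ar_def cheb_def using integral_unique[OF A_int[of "2 * int k"]] by (simp add: mult.assoc)
    also have "\<dots> = 1 / (2 * (1 - 4 * real k ^ 2))" by (simp add: power2_eq_square)
    finally have "Ar (4 * int k) = 1 / (2 * (1 - 4 * real k ^ 2))" .
    moreover have "1 - 4 * real k ^ 2 \<noteq> 0"
    proof
      assume h: "1 - 4 * real k ^ 2 = 0"
      hence "real (4 * k ^ 2) = 1" by simp
      hence "4 * k ^ 2 = 1" by (metis of_nat_eq_1_iff)
      thus False by presburger
    qed
    ultimately have "complex_of_real (Ar (4 * int k)) = 1 / (2 * complex_of_real (1 - 4 * real k ^ 2))"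
      by simp
    moreover have "complex_of_real (1 - 4 * real k ^ 2) \<noteq> 0"
      using \<open>1 - 4 * real k ^ 2 \<noteq> 0\<close> by (metis of_real_eq_0_iff)
    ultimately show "2 * c (4 * int k, 0) * complex_of_real (Ar (4 * int k)) = c (4 * int k, 0) / complex_of_real (1 - 4 * real k ^ 2)"
      by (simp only:) (simp add: field_simps del: of_real_diff of_real_mult of_real_power of_real_of_nat_eq)
  qed
  finally show ?thesis .
qed

definition fscale :: "complex \<Rightarrow> ('x \<Rightarrow> complex) \<Rightarrow> ('x \<Rightarrow> complex)" where
  "fscale c f = (\<lambda>x. c * f x)"

interpretation fvs: vector_space "fscale :: complex \<Rightarrow> ('x \<Rightarrow> complex) \<Rightarrow> _"
  by unfold_locales (auto simp: fscale_def fun_eq_iff algebra_simps)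

lemma sum_fun_app: "finite A \<Longrightarrow> (\<Sum>a\<in>A. f a) x = (\<Sum>a\<in>A. f a x)"
  by (induction A rule: finite_induct) auto

lemma abstract_interp:
  fixes I :: "'x set" and G :: "'g set" and chi :: "'g \<Rightarrow> 'x \<Rightarrow> complex" and w :: "'x \<Rightarrow> complex"
  assumes fI: "finite I" and fG: "finite G" and cardeq: "card G = card I"
    and orth: "\<And>g g'. g \<in> G \<Longrightarrow> g' \<in> G \<Longrightarrow> g \<noteq> g' \<Longrightarrow> (\<Sum>i\<in>I. w i * chi g' i * cnj (chi g i)) = 0"
    and nz: "\<And>g. g \<in> G \<Longrightarrow> (\<Sum>i\<in>I. w i * chi g i * cnj (chi g i)) \<noteq> 0"
  shows "\<exists>c. \<forall>i\<in>I. f i = (\<Sum>g\<in>G. c g * chi g i)"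
proof -
  define R where "R h = (\<lambda>x. if x \<in> I then h x else 0)" for h :: "'x \<Rightarrow> complex"
  define L where "L g h = (\<Sum>i\<in>I. w i * h i * cnj (chi g i))" for g h
  have LR: "L g (R h) = L g h" for g h unfolding L_def R_def by (rule sum.cong) auto
  have Lsum: "L g (\<Sum>v\<in>T. fscale (u v) v) = (\<Sum>v\<in>T. u v * L g v)" if "finite T" for g T u
    using that unfolding L_def fscale_def
    by (simp add: sum_fun_app sum_distrib_left sum_distrib_right mult_ac sum.swap[of _ I])
  have injB: "inj_on (\<lambda>g. R (chi g)) G"
  proof (rule inj_onI)
    fix g g' assume g: "g \<in> G" "g' \<in> G" and eq: "R (chi g) = R (chi g')"
    show "g = g'"
    proof (rule ccontr)
      assume ne: "g \<noteq> g'"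
      have "L g (chi g) = L g (R (chi g))" by (simp add: LR)
      also have "\<dots> = L g (chi g')" using eq by (simp add: LR)
      also have "\<dots> = 0" using orth[OF g(1) g(2) ne] by (simp add: L_def)
      finally show False using nz[OF g(1)] by (simp add: L_def)
    qed
  qed
  define B where "B = (\<lambda>g. R (chi g)) ` G"
  define D where "D = (\<lambda>i. (\<lambda>x. if x = i then (1::complex) else 0)) ` I"
  have fB: "finite B" using fG by (simp add: B_def)
  have cardB: "card B = card I" using injB cardeq by (simp add: B_def card_image)
  have fD: "finite D" using fI by (simp add: D_def)
  have cardD: "card D \<le> card I" unfolding D_def by (rule card_image_le[OF fI])
  have inspan: "R h \<in> fvs.span D" for h
  proof -
    have "R h = (\<Sum>i\<in>I. fscale (h i) (\<lambda>x. if x = i then 1 else 0))"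
    proof (rule ext)
      fix x
      have "(\<Sum>i\<in>I. h i * (if x = i then 1 else 0)) = (\<Sum>i\<in>I. if x = i then h i else 0)"
        by (rule sum.cong) auto
      also have "\<dots> = (if x \<in> I then h x else 0)" using fI by (simp add: sum.delta)
      finally show "R h x = (\<Sum>i\<in>I. fscale (h i) (\<lambda>x. if x = i then 1 else 0)) x"
        by (simp add: sum_fun_app[OF fI] fscale_def R_def)
    qed
    also have "\<dots> \<in> fvs.span D"
      by (intro fvs.span_sum fvs.span_scale fvs.span_base) (auto simp: D_def)
    finally show ?thesis .
  qed
  have BD: "B \<subseteq> fvs.span D" using inspan by (auto simp: B_def)
  have indB: "fvs.independent B"
  proof (rule fvs.independent_if_scalars_zero[OF fB])
    fix u v assume s: "(\<Sum>v\<in>B. fscale (u v) v) = 0" and v: "v \<in> B"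
    then obtain g where g: "g \<in> G" and vg: "v = R (chi g)" by (auto simp: B_def)
    have "0 = L g (\<Sum>v\<in>B. fscale (u v) v)" using s by (simp add: L_def)
    also have "\<dots> = (\<Sum>v'\<in>B. u v' * L g v')" by (rule Lsum[OF fB])
    also have "\<dots> = u v * L g v"
    proof (rule sum.remove[OF fB v, THEN trans], simp, rule sum.neutral, rule ballI)
      fix v' assume "v' \<in> B - {v}"
      then obtain g' where g': "g' \<in> G" "v' = R (chi g')" "g' \<noteq> g" using vg by (auto simp: B_def)
      have "L g v' = L g (chi g')" using g'(2) LR by simp
      also have "\<dots> = 0" using orth[OF g g'(1) g'(3)[symmetric]] by (simp add: L_def)
      finally show "u v' * L g v' = 0" by simp
    qed
    moreover have "L g v = L g (chi g)" using vg LR by simp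
    ultimately show "u v = 0" using nz[OF g] by (simp add: L_def)
  qed
  have "R f \<in> fvs.span B"
  proof (rule ccontr)
    assume nin: "R f \<notin> fvs.span B"
    hence ind2: "fvs.independent (insert (R f) B)" using indB by (rule fvs.independent_insertI)
    have "insert (R f) B \<subseteq> fvs.span D" using BD inspan by auto
    from fvs.independent_span_bound[OF fD ind2 this]
    have "card (insert (R f) B) \<le> card D" by simp
    moreover have "R f \<notin> B" using nin fvs.span_base by blast
    ultimately show False using cardB cardD fB by simp
  qed
  then obtain u where u: "R f = (\<Sum>v\<in>B. fscale (u v) v)" using fvs.span_finite[OF fB] by auto
  show ?thesis
  proof (intro exI ballI)
    fix i assume i: "i \<in> I"
    have "f i = R f i" using i by (simp add: R_def)
    also have "\<dots> = (\<Sum>v\<in>B. u v * v i)" by (simp add: u sum_fun_app[OF fB] fscale_def)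
    also have "\<dots> = (\<Sum>g\<in>G. u (R (chi g)) * R (chi g) i)"
      unfolding B_def by (simp add: sum.reindex[OF injB])
    also have "\<dots> = (\<Sum>g\<in>G. u (R (chi g)) * chi g i)" using i by (simp add: R_def)
    finally show "f i = (\<Sum>g\<in>G. (\<lambda>g. u (R (chi g))) g * chi g i)" .
  qed
qed

lemma nz_norm:
  assumes m1: "m1 \<ge> 1" and m2: "m2 \<ge> 1" and g: "g \<in> Gam m1 m2"
  shows "(\<Sum>i\<in>Idx m1 m2. complex_of_real (wt m1 m2 i) * chi m1 m2 g i * cnj (chi m1 m2 g i)) \<noteq> 0"
proof -
  have eq: "(\<Sum>i\<in>Idx m1 m2. complex_of_real (wt m1 m2 i) * chi m1 m2 g i * cnj (chi m1 m2 g i))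
      = complex_of_real (\<Sum>i\<in>Idx m1 m2. wt m1 m2 i * (cmod (chi m1 m2 g i))^2)"
    unfolding of_real_sum by (intro sum.cong refl) (simp only: of_real_mult complex_norm_square mult.assoc)
  have z: "(0,0) \<in> Idx m1 m2" using m1 m2 by (auto simp: Idx_def)
  have c1: "chi m1 m2 g (0,0) = 1" by (simp add: chi_def)
  have pos: "0 < wt m1 m2 (0,0) * (cmod (chi m1 m2 g (0,0)))^2" using m1 m2 c1 by (simp add: wt_def)
  have "wt m1 m2 (0,0) * (cmod (chi m1 m2 g (0,0)))^2 \<le> (\<Sum>i\<in>Idx m1 m2. wt m1 m2 i * (cmod (chi m1 m2 g i))^2)"
    by (rule member_le_sum[OF z _ finite_Idx]) (auto simp: wt_def)
  hence "0 < (\<Sum>i\<in>Idx m1 m2. wt m1 m2 i * (cmod (chi m1 m2 g i))^2)" using pos by linarith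
  hence "complex_of_real (\<Sum>i\<in>Idx m1 m2. wt m1 m2 i * (cmod (chi m1 m2 g i))^2) \<noteq> 0"
    by (subst of_real_eq_0_iff) linarith
  thus ?thesis unfolding eq .
qed

lemma node:
  assumes m1: "m1 \<ge> 1" and i: "i \<in> Idx m1 m2"
  shows "Xf g (rnode m1 (fst i)) (thnode m2 (snd i)) = chi m1 m2 g i"
proof -
  have "0 \<le> fst i" "fst i \<le> int m1" using i by (auto simp: Idx_def)
  hence "0 \<le> of_int (fst i) * pi / (2 * real m1)" "of_int (fst i) * pi / (2 * real m1) \<le> pi"
    using m1 by (auto simp: field_simps)
  hence ac: "arccos (rnode m1 (fst i)) = of_int (fst i) * pi / (2 * real m1)"
    unfolding rnode_def by (rule arccos_cos)
  show ?thesis unfolding Xf_def cheb_def ac by (simp add: chi_def thnode_def mult.assoc)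
qed

lemma coef:
  assumes m1: "m1 \<ge> 1" and m2: "m2 \<ge> 1" and ip: "interp m1 m2 c f" and g: "g \<in> Gam m1 m2"
  shows "c g = ipw m1 m2 f (chi m1 m2 g) / ipw m1 m2 (chi m1 m2 g) (chi m1 m2 g)"
proof -
  define N where "N g' = (\<Sum>i\<in>Idx m1 m2. complex_of_real (wt m1 m2 i) * chi m1 m2 g' i * cnj (chi m1 m2 g i))" for g'
  have fi: "f i = (\<Sum>g'\<in>Gam m1 m2. c g' * chi m1 m2 g' i)" if "i \<in> Idx m1 m2" for i
    using ip that m1 by (auto simp: interp_def Pc_def node)
  have "ipw m1 m2 f (chi m1 m2 g) = (\<Sum>i\<in>Idx m1 m2. complex_of_real (wt m1 m2 i) * (\<Sum>g'\<in>Gam m1 m2. c g' * chi m1 m2 g' i) * cnj (chi m1 m2 g i))"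
    unfolding ipw_def by (intro sum.cong refl) (simp add: fi)
  also have "\<dots> = (\<Sum>g'\<in>Gam m1 m2. c g' * N g')"
  proof -
    have "(\<Sum>i\<in>Idx m1 m2. complex_of_real (wt m1 m2 i) * (\<Sum>g'\<in>Gam m1 m2. c g' * chi m1 m2 g' i) * cnj (chi m1 m2 g i))
        = (\<Sum>i\<in>Idx m1 m2. \<Sum>g'\<in>Gam m1 m2. c g' * (complex_of_real (wt m1 m2 i) * chi m1 m2 g' i * cnj (chi m1 m2 g i)))"
      by (intro sum.cong refl) (simp add: sum_distrib_left sum_distrib_right mult_ac)
    also have "\<dots> = (\<Sum>g'\<in>Gam m1 m2. \<Sum>i\<in>Idx m1 m2. c g' * (complex_of_real (wt m1 m2 i) * chi m1 m2 g' i * cnj (chi m1 m2 g i)))"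
      by (rule sum.swap)
    also have "\<dots> = (\<Sum>g'\<in>Gam m1 m2. c g' * N g')"
      unfolding N_def by (simp add: sum_distrib_left)
    finally show ?thesis .
  qed
  also have "\<dots> = c g * N g"
  proof -
    have "(\<Sum>g'\<in>Gam m1 m2 - {g}. c g' * N g') = 0"
    proof (rule sum.neutral, rule ballI)
      fix g' assume "g' \<in> Gam m1 m2 - {g}"
      hence "N g' = 0" unfolding N_def by (intro orth[OF m1 m2 g]) auto
      thus "c g' * N g' = 0" by simp
    qed
    thus ?thesis by (simp add: sum.remove[OF finite_Gam g])
  qed
  finally have e1: "ipw m1 m2 f (chi m1 m2 g) = c g * N g" .
  have e2: "ipw m1 m2 (chi m1 m2 g) (chi m1 m2 g) = N g" by (simp add: ipw_def N_def)
  have "N g \<noteq> 0" unfolding N_def by (rule nz_norm[OF m1 m2 g])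
  thus ?thesis using e1 e2 by simp
qed

lemma exist:
  assumes m1: "m1 \<ge> 1" and m2: "m2 \<ge> 1"
  shows "\<exists>c. interp m1 m2 c f"
proof -
  have "\<exists>c. \<forall>i\<in>Idx m1 m2. f i = (\<Sum>g\<in>Gam m1 m2. c g * chi m1 m2 g i)"
  proof (rule abstract_interp[OF finite_Idx finite_Gam card_Idx[symmetric]])
    fix g g' assume "g \<in> Gam m1 m2" "g' \<in> Gam m1 m2" "g \<noteq> g'"
    thus "(\<Sum>i\<in>Idx m1 m2. complex_of_real (wt m1 m2 i) * chi m1 m2 g' i * cnj (chi m1 m2 g i)) = 0"
      by (rule orth[OF m1 m2])
  next
    fix g assume "g \<in> Gam m1 m2"
    thus "(\<Sum>i\<in>Idx m1 m2. complex_of_real (wt m1 m2 i) * chi m1 m2 g i * cnj (chi m1 m2 g i)) \<noteq> 0"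
      by (rule nz_norm[OF m1 m2])
  qed
  then obtain c where c: "\<forall>i\<in>Idx m1 m2. f i = (\<Sum>g\<in>Gam m1 m2. c g * chi m1 m2 g i)" by blast
  have "interp m1 m2 c f" unfolding interp_def
  proof
    fix i assume i: "i \<in> Idx m1 m2"
    have "Pc m1 m2 c (rnode m1 (fst i)) (thnode m2 (snd i)) = (\<Sum>g\<in>Gam m1 m2. c g * chi m1 m2 g i)"
      unfolding Pc_def by (intro sum.cong refl) (simp only: node[OF m1 i])
    thus "Pc m1 m2 c (rnode m1 (fst i)) (thnode m2 (snd i)) = f i" using c i by simp
  qed
  thus ?thesis by blast
qed

theorem mainTheorem14:
  fixes m1 m2 :: nat and f :: "int \<times> int \<Rightarrow> complex"
  assumes "m1 \<ge> 1" and "m2 \<ge> 1"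
  shows "(\<exists>c. interp m1 m2 c f)
    \<and> (\<forall>c. interp m1 m2 c f \<longrightarrow>
          (\<forall>g\<in>Gam m1 m2. c g = ipw m1 m2 f (chi m1 m2 g) / ipw m1 m2 (chi m1 m2 g) (chi m1 m2 g))
          \<and> diskavg (Pc m1 m2 c) =
              (\<Sum>k=0..m1 div 2. c (4 * int k, 0) / complex_of_real (1 - 4 * real k ^ 2)))
    \<and> (\<forall>c. let fP = (\<lambda>i. Pc m1 m2 c (rnode m1 (fst i)) (thnode m2 (snd i))) in
          (\<Sum>k=0..m1 div 2. (ipw m1 m2 fP (chi m1 m2 (4 * int k, 0))
                              / ipw m1 m2 (chi m1 m2 (4 * int k, 0)) (chi m1 m2 (4 * int k, 0)))
                             / complex_of_real (1 - 4 * real k ^ 2))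
          = diskavg (Pc m1 m2 c))"
proof (intro conjI allI impI ballI)
  show "\<exists>c. interp m1 m2 c f" by (rule exist[OF assms])
next
  fix c g assume "interp m1 m2 c f" "g \<in> Gam m1 m2"
  thus "c g = ipw m1 m2 f (chi m1 m2 g) / ipw m1 m2 (chi m1 m2 g) (chi m1 m2 g)" by (rule coef[OF assms])
next
  fix c show "diskavg (Pc m1 m2 c) = (\<Sum>k=0..m1 div 2. c (4 * int k, 0) / complex_of_real (1 - 4 * real k ^ 2))"
    by (rule disk[OF assms])
next
  fix c
  define fP where "fP = (\<lambda>i. Pc m1 m2 c (rnode m1 (fst i)) (thnode m2 (snd i)))"
  have ip: "interp m1 m2 c fP" by (simp add: interp_def fP_def)
  have "(\<Sum>k=0..m1 div 2. (ipw m1 m2 fP (chi m1 m2 (4 * int k, 0))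
                              / ipw m1 m2 (chi m1 m2 (4 * int k, 0)) (chi m1 m2 (4 * int k, 0)))
                             / complex_of_real (1 - 4 * real k ^ 2))
      = (\<Sum>k=0..m1 div 2. c (4 * int k, 0) / complex_of_real (1 - 4 * real k ^ 2))"
  proof (intro sum.cong refl)
    fix k assume "k \<in> {0..m1 div 2}"
    hence "(4 * int k, 0) \<in> Gam m1 m2" using assms by (auto simp: Gam_def)
    thus "ipw m1 m2 fP (chi m1 m2 (4 * int k, 0)) / ipw m1 m2 (chi m1 m2 (4 * int k, 0)) (chi m1 m2 (4 * int k, 0))
         / complex_of_real (1 - 4 * real k ^ 2) = c (4 * int k, 0) / complex_of_real (1 - 4 * real k ^ 2)"
      using coef[OF assms ip] by simp
  qed
  also have "\<dots> = diskavg (Pc m1 m2 c)" by (rule disk[OF assms, symmetric])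
  finally show "let fP = (\<lambda>i. Pc m1 m2 c (rnode m1 (fst i)) (thnode m2 (snd i))) in
          (\<Sum>k=0..m1 div 2. (ipw m1 m2 fP (chi m1 m2 (4 * int k, 0))
                              / ipw m1 m2 (chi m1 m2 (4 * int k, 0)) (chi m1 m2 (4 * int k, 0)))
                             / complex_of_real (1 - 4 * real k ^ 2))
          = diskavg (Pc m1 m2 c)" unfolding fP_def Let_def .
qed

end
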